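(* For all integers $n\geq 2$ and $m\geq 1$, $\mathrm{mbt}(K_{2n}\Box C_{2m+1})=\Delta(K_{2n}\Box C_{2m+1})+1=2n+2$.
   Context: A book embedding of a graph $G$ consists of a linear ordering of $V(G)$ (the vertices placed on the spine) together with an assignment of each edge to one of a set of pages such that no two edges on the same page cross, i.e. there are no two edges $uv$, $xy$ on the same page with $u<x<v<y$ in the ordering. A book embedding is matching if on every page each vertex is incident with at most one edge of that page. The matching book thickness $\mathrm{mbt}(G)$ is the minimum number of pages over all matching book embeddings of $G$. $\Delta(G)$ denotes the maximum degree of $G$. $K_r$ is the complete graph on $r$ vertices, $C_s$ the cycle on $s$ vertices. The Cartesian product $G\Box B$ has vertex set $V(G)\times V(B)$, with $(u_1,v_1)$ adjacent to $(u_2,v_2)$ iff either $u_1=u_2$ and $v_1v_2\in E(B)$, or $v_1=v_2$ and $u_1u_2\in E(G)$. *)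

theory Defs
  imports Main
begin

type_synonym 'a graph = "'a set \<times> 'a set set"

definition verts :: "'a graph \<Rightarrow> 'a set" where "verts G = fst G"
definition edges :: "'a graph \<Rightarrow> 'a set set" where "edges G = snd G"

definition complete_graph :: "nat \<Rightarrow> nat graph" where
  "complete_graph r = ({0..<r}, {{u, v} | u v. u < r \<and> v < r \<and> u \<noteq> v})"

text \<open>Cycle on s vertices (meaningful for s \<ge> 3).\<close>
definition cycle_graph :: "nat \<Rightarrow> nat graph" where
  "cycle_graph s = ({0..<s}, {{i, (i + 1) mod s} | i. i < s})"

definition cart_prod :: "'a graph \<Rightarrow> 'b graph \<Rightarrow> ('a \<times> 'b) graph" where
  "cart_prod G B = (verts G \<times> verts B,
     {{(u, v1), (u, v2)} | u v1 v2. u \<in> verts G \<and> {v1, v2} \<in> edges B}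
   \<union> {{(u1, v), (u2, v)} | u1 u2 v. v \<in> verts B \<and> {u1, u2} \<in> edges G})"

definition degree :: "'a graph \<Rightarrow> 'a \<Rightarrow> nat" where
  "degree G v = card {e \<in> edges G. v \<in> e}"

definition max_degree :: "'a graph \<Rightarrow> nat" where
  "max_degree G = Max (degree G ` verts G)"

text \<open>A matching book embedding of G with k pages: an injective placement
  ord of the vertices on the spine (a linear ordering) and a page assignment
  of edges to pages 0..k-1, with no two crossing edges on the same page and
  each page a matching.\<close>
definition matching_book_embedding ::
  "'a graph \<Rightarrow> nat \<Rightarrow> ('a \<Rightarrow> nat) \<Rightarrow> ('a set \<Rightarrow> nat) \<Rightarrow> bool" where
  "matching_book_embedding G k ord page \<longleftrightarrow>
     inj_on ord (verts G) \<and>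
     (\<forall>e \<in> edges G. page e < k) \<and>
     (\<forall>u v x y. {u, v} \<in> edges G \<longrightarrow> {x, y} \<in> edges G \<longrightarrow>
        page {u, v} = page {x, y} \<longrightarrow>
        \<not> (ord u < ord x \<and> ord x < ord v \<and> ord v < ord y)) \<and>
     (\<forall>e \<in> edges G. \<forall>f \<in> edges G. e \<noteq> f \<longrightarrow> page e = page f \<longrightarrow> e \<inter> f = {})"

definition mbt :: "'a graph \<Rightarrow> nat" where
  "mbt G = (LEAST k. \<exists>ord page. matching_book_embedding G k ord page)"

end

theory Submission
  imports Defs
begin



locale ps = fixes N L :: nat assumes N3: "3 \<le> N" and L3: "3 \<le> L" and oddL: "odd L"
begin

definition G :: "(nat \<times> nat) graph" where
  "G = cart_prod (complete_graph N) (cycle_graph L)"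

fun adj :: "nat \<times> nat \<Rightarrow> nat \<times> nat \<Rightarrow> bool" where
  "adj (u,j) (w,k) = (u < N \<and> w < N \<and> j < L \<and> k < L \<and>
     ((j = k \<and> u \<noteq> w) \<or> (u = w \<and> (k = (j+1) mod L \<or> j = (k+1) mod L))))"

lemma suc_mod_ne: "k < L \<Longrightarrow> Suc k mod L \<noteq> k"
proof -
  assume k: "k < L"
  show ?thesis
  proof (cases "Suc k < L")
    case True then show ?thesis by simp
  next
    case False then have "Suc k = L" using k by simp
    then show ?thesis using L3 by simp
  qed
qed

lemma suc_mod_ne2: "k < L \<Longrightarrow> k \<noteq> Suc k mod L"
  using suc_mod_ne by metis

lemma adj_sym: "adj a b \<Longrightarrow> adj b a"
  by (cases a; cases b) auto

lemma adj_irrefl: "adj a b \<Longrightarrow> a \<noteq> b"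
  using suc_mod_ne suc_mod_ne2 by (cases a; cases b) auto

lemma verts_G: "verts G = {0..<N} \<times> {0..<L}"
  by (simp add: G_def cart_prod_def verts_def complete_graph_def cycle_graph_def)

lemma cyc_edge: "{v1, v2} \<in> edges (cycle_graph L) \<longleftrightarrow>
   v1 < L \<and> v2 < L \<and> (v2 = (v1+1) mod L \<or> v1 = (v2+1) mod L)"
proof
  assume "{v1, v2} \<in> edges (cycle_graph L)"
  then obtain i where i: "i < L" "{v1,v2} = {i, (i+1) mod L}"
    by (auto simp: edges_def cycle_graph_def)
  have "(i+1) mod L < L" using L3 by simp
  with i show "v1 < L \<and> v2 < L \<and> (v2 = (v1+1) mod L \<or> v1 = (v2+1) mod L)"
    by (auto simp: doubleton_eq_iff)
next
  assume h: "v1 < L \<and> v2 < L \<and> (v2 = (v1+1) mod L \<or> v1 = (v2+1) mod L)"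
  show "{v1, v2} \<in> edges (cycle_graph L)"
  proof (cases "v2 = (v1+1) mod L")
    case True
    then show ?thesis using h by (auto simp: edges_def cycle_graph_def)
  next
    case False
    then have "v1 = (v2+1) mod L" using h by auto
    then have "{v1,v2} = {v2, (v2+1) mod L}" by auto
    then show ?thesis using h unfolding edges_def cycle_graph_def by auto
  qed
qed

lemma K_edge: "{u1, u2} \<in> edges (complete_graph N) \<longleftrightarrow> u1 < N \<and> u2 < N \<and> u1 \<noteq> u2"
  by (auto simp: edges_def complete_graph_def doubleton_eq_iff)

lemma edges_G: "e \<in> edges G \<longleftrightarrow> (\<exists>a b. e = {a,b} \<and> adj a b)"
proof
  assume "e \<in> edges G"
  then have "(\<exists>u v1 v2. e = {(u, v1), (u, v2)} \<and> u < N \<and> {v1, v2} \<in> edges (cycle_graph L))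
     \<or> (\<exists>u1 u2 v. e = {(u1, v), (u2, v)} \<and> v < L \<and> {u1, u2} \<in> edges (complete_graph N))"
    by (auto simp: G_def cart_prod_def edges_def[of "(_,_)"] verts_def complete_graph_def cycle_graph_def)
  then show "\<exists>a b. e = {a,b} \<and> adj a b"
  proof
    assume "\<exists>u v1 v2. e = {(u, v1), (u, v2)} \<and> u < N \<and> {v1, v2} \<in> edges (cycle_graph L)"
    then obtain u v1 v2 where "e = {(u, v1), (u, v2)}" "u < N" "{v1, v2} \<in> edges (cycle_graph L)" by blast
    then show ?thesis unfolding cyc_edge by (intro exI[of _ "(u,v1)"] exI[of _ "(u,v2)"]) auto
  next
    assume "\<exists>u1 u2 v. e = {(u1, v), (u2, v)} \<and> v < L \<and> {u1, u2} \<in> edges (complete_graph N)"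
    then obtain u1 u2 v where "e = {(u1, v), (u2, v)}" "v < L" "{u1, u2} \<in> edges (complete_graph N)" by blast
    then show ?thesis unfolding K_edge by (intro exI[of _ "(u1,v)"] exI[of _ "(u2,v)"]) auto
  qed
next
  assume "\<exists>a b. e = {a,b} \<and> adj a b"
  then obtain u j w k where e: "e = {(u,j),(w,k)}" and a: "adj (u,j) (w,k)" by (metis prod.exhaust)
  show "e \<in> edges G"
  proof (cases "j = k")
    case True
    then have "e = {(u, j), (w, j)} \<and> j < L \<and> {u, w} \<in> edges (complete_graph N)"
      using a e K_edge suc_mod_ne suc_mod_ne2 by auto
    then show ?thesis by (auto simp: G_def cart_prod_def edges_def[of "(_,_)"] verts_def complete_graph_def cycle_graph_def)
  next
    case False
    then have "u = w" using a by auto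
    then have "e = {(u, j), (u, k)} \<and> u < N \<and> {j, k} \<in> edges (cycle_graph L)"
      using a e False cyc_edge by auto
    then show ?thesis by (auto simp: G_def cart_prod_def edges_def[of "(_,_)"] verts_def complete_graph_def cycle_graph_def)
  qed
qed

end


context ps begin

lemma succm: "k < L \<Longrightarrow> (k+1) mod L = (if k+1 < L then k+1 else 0)"
proof -
  assume k: "k < L"
  show ?thesis
  proof (cases "k+1 < L")
    case True then show ?thesis by simp
  next
    case False then have "k+1 = L" using k by simp
    then show ?thesis by simp
  qed
qed

lemma predm: "j < L \<Longrightarrow> (j+L-1) mod L = (if j = 0 then L-1 else j-1)"
proof (cases "j = 0")
  case True then show ?thesis using L3 by simp
next
  case False
  assume j: "j < L"
  have "j + L - 1 = (j - 1) + L" using False by simp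
  then have "(j+L-1) mod L = (j-1) mod L" by simp
  then show ?thesis using False j by simp
qed

lemma pred_mod: assumes "j < L" "k < L" shows "(j = (k+1) mod L) \<longleftrightarrow> (k = (j+L-1) mod L)"
  unfolding succm[OF assms(2)] predm[OF assms(1)] using L3 assms by (simp split: if_splits; linarith)

lemma adj_iff: assumes "x < N" "j < L"
  shows "adj (x,j) (w,k) \<longleftrightarrow> w < N \<and> k < L \<and> ((k=j \<and> w\<noteq>x) \<or> (w=x \<and> (k = (j+1) mod L \<or> k = (j+L-1) mod L)))"
proof -
  have "k < L \<Longrightarrow> (j = (k+1) mod L) \<longleftrightarrow> (k = (j+L-1) mod L)" using pred_mod assms(2) by blast
  then show ?thesis using assms by auto
qed

lemma nbrs: assumes "x < N" "j < L"
  shows "{w. adj (x,j) w} = (\<lambda>w. (w,j)) ` ({0..<N} - {x}) \<union> {(x,(j+1) mod L), (x,(j+L-1) mod L)}"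
proof -
  have "(j+1) mod L < L" "(j+L-1) mod L < L" using L3 by auto
  moreover have "\<And>k. k < L \<Longrightarrow> (j = (k+1) mod L) \<longleftrightarrow> (k = (j+L-1) mod L)"
    using pred_mod assms(2) by blast
  ultimately show ?thesis using assms by (auto simp del: adj.simps simp: adj_iff[OF assms])
qed

lemma card_nbrs: assumes "x < N" "j < L"
  shows "card {w. adj (x,j) w} = N + 1"
proof -
  have d1: "(j+1) mod L \<noteq> j" using suc_mod_ne assms(2) by simp
  have d2: "(j+L-1) mod L \<noteq> j" using predm[OF assms(2)] L3 by (simp split: if_splits; linarith)
  have d3: "(j+1) mod L \<noteq> (j+L-1) mod L" using predm[OF assms(2)] succm[OF assms(2)] L3 assms(2)
    by (simp split: if_splits; linarith)
  have fin: "finite ((\<lambda>w. (w,j)) ` ({0..<N} - {x}))" by simp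
  have disj: "(\<lambda>w. (w,j)) ` ({0..<N} - {x}) \<inter> {(x,(j+1) mod L), (x,(j+L-1) mod L)} = {}"
    using d1 d2 by auto
  have c1: "card ((\<lambda>w. (w,j)) ` ({0..<N} - {x})) = N - 1"
    using assms(1) by (subst card_image) (auto simp: inj_on_def)
  have c2: "card {(x,(j+1) mod L), (x,(j+L-1) mod L)} = 2" using d3 by simp
  show ?thesis unfolding nbrs[OF assms] using card_Un_disjoint[OF fin _ disj] c1 c2 assms(1) N3 by simp
qed

lemma inc_edges: "{e \<in> edges G. v \<in> e} = (\<lambda>w. {v,w}) ` {w. adj v w}"
proof
  show "{e \<in> edges G. v \<in> e} \<subseteq> (\<lambda>w. {v,w}) ` {w. adj v w}"
  proof
    fix e assume "e \<in> {e \<in> edges G. v \<in> e}"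
    then obtain a b where e: "e = {a,b}" "adj a b" "v \<in> e" using edges_G by auto
    show "e \<in> (\<lambda>w. {v,w}) ` {w. adj v w}"
    proof (cases "v = a")
      case True then show ?thesis using e by auto
    next
      case False
      then have "v = b" using e by auto
      then have "e = {v,a}" "adj v a" using e adj_sym by auto
      then show ?thesis by auto
    qed
  qed
next
  show "(\<lambda>w. {v,w}) ` {w. adj v w} \<subseteq> {e \<in> edges G. v \<in> e}"
  proof
    fix e assume "e \<in> (\<lambda>w. {v,w}) ` {w. adj v w}"
    then obtain w where "e = {v,w}" "adj v w" by auto
    then show "e \<in> {e \<in> edges G. v \<in> e}" using edges_G by blast
  qed
qed

lemma degree_G: assumes "v \<in> verts G" shows "degree G v = N + 1"
proof -
  obtain x j where v: "v = (x,j)" "x < N" "j < L" using assms verts_G by auto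
  have "inj_on (\<lambda>w. {v,w}) {w. adj v w}" by (auto simp: inj_on_def doubleton_eq_iff)
  then have "card ((\<lambda>w. {v,w}) ` {w. adj v w}) = card {w. adj v w}" by (rule card_image)
  then show ?thesis unfolding degree_def inc_edges using card_nbrs v by simp
qed

lemma max_degree_G: "max_degree G = N + 1"
proof -
  have "verts G \<noteq> {}" using verts_G N3 L3 by auto
  then have "degree G ` verts G = {N+1}" using degree_G by auto
  then show ?thesis unfolding max_degree_def by simp
qed

end



lemma inv_even:
  assumes "finite S" "\<forall>z\<in>S. f z \<in> S \<and> f z \<noteq> z \<and> f (f z) = z"
  shows "even (card S)"
  using assms
proof (induct "card S" arbitrary: S rule: less_induct)
  case less
  show ?case
  proof (cases "S = {}")
    case True then show ?thesis by simp
  next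
    case False
    then obtain z where z: "z \<in> S" by auto
    let ?S' = "S - {z, f z}"
    have fz: "f z \<in> S" "f z \<noteq> z" using less.prems z by auto
    have cS: "card S = card ?S' + 2"
    proof -
      have "{z, f z} \<subseteq> S" using z fz by auto
      then have "card ?S' = card S - card {z, f z}" using less.prems(1) by (simp add: card_Diff_subset)
      moreover have "card {z, f z} = 2" using fz by simp
      moreover have "card {z, f z} \<le> card S" using \<open>{z, f z} \<subseteq> S\<close> less.prems(1) card_mono by blast
      ultimately show ?thesis by simp
    qed
    have "\<forall>y\<in>?S'. f y \<in> ?S' \<and> f y \<noteq> y \<and> f (f y) = y"
    proof
      fix y assume y: "y \<in> ?S'"
      then have "f y \<in> S" "f y \<noteq> y" "f (f y) = y" using less.prems by auto
      moreover have "f y \<noteq> z" using y \<open>f (f y) = y\<close> by auto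
      moreover have "f y \<noteq> f z" using y less.prems z by (metis DiffE insertCI)
      ultimately show "f y \<in> ?S' \<and> f y \<noteq> y \<and> f (f y) = y" by auto
    qed
    then have "even (card ?S')" using less.hyps[of ?S'] cS less.prems(1) by simp
    then show ?thesis using cS by simp
  qed
qed

context ps begin

lemma adj_V: "adj a b \<Longrightarrow> a \<in> verts G \<and> b \<in> verts G"
  by (cases a; cases b) (auto simp: verts_G)

lemma edge_adj: "{a,b} \<in> edges G \<Longrightarrow> adj a b"
  using edges_G adj_sym by (auto simp: doubleton_eq_iff)

lemma finV: "finite (verts G)" by (simp add: verts_G)

lemma lower_bound:
  assumes emb: "matching_book_embedding G k ord page"
  shows "N + 2 \<le> k"
proof (rule ccontr)
  assume "\<not> N + 2 \<le> k"
  then have kle: "k \<le> N + 1" by simp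
  have inj: "inj_on ord (verts G)"
    and pg: "\<And>e. e \<in> edges G \<Longrightarrow> page e < k"
    and cr: "\<And>u v x y. {u, v} \<in> edges G \<Longrightarrow> {x, y} \<in> edges G \<Longrightarrow>
        page {u, v} = page {x, y} \<Longrightarrow> \<not> (ord u < ord x \<and> ord x < ord v \<and> ord v < ord y)"
    and mt: "\<And>e f. e \<in> edges G \<Longrightarrow> f \<in> edges G \<Longrightarrow> e \<noteq> f \<Longrightarrow> page e = page f \<Longrightarrow> e \<inter> f = {}"
    using emb unfolding matching_book_embedding_def by blast+
  have surj: "\<exists>w. adj v w \<and> page {v,w} = p" if v: "v \<in> verts G" and p: "p < k" for v p
  proof -
    let ?Ev = "{e \<in> edges G. v \<in> e}"
    have "finite {w. adj v w}" by (rule finite_subset[OF _ finV]) (auto dest: adj_V)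
    then have fin: "finite ?Ev" unfolding inc_edges by simp
    have "inj_on page ?Ev"
    proof (rule inj_onI)
      fix e f assume "e \<in> ?Ev" "f \<in> ?Ev" "page e = page f"
      then show "e = f" using mt by blast
    qed
    then have "card (page ` ?Ev) = card ?Ev" by (rule card_image)
    also have "\<dots> = N + 1" using degree_G[OF v] unfolding degree_def .
    finally have c: "card (page ` ?Ev) = N + 1" .
    have sub: "page ` ?Ev \<subseteq> {..<k}" using pg by auto
    then have "N + 1 \<le> k" using c card_mono[OF finite_lessThan sub] by simp
    then have "card (page ` ?Ev) = card {..<k}" using c kle by simp
    then have "page ` ?Ev = {..<k}" using card_subset_eq[OF finite_lessThan sub] by simp
    then have "p \<in> page ` ?Ev" using p by simp
    then obtain e where "e \<in> ?Ev" "page e = p" by blast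
    then show ?thesis unfolding inc_edges by auto
  qed
  define S where "S a b = {z \<in> verts G. ord a < ord z \<and> ord z < ord b}" for a b
  have finS: "finite (S a b)" for a b unfolding S_def using finV by simp
  have par: "even (card (S a b))" if ab: "adj a b" "ord a < ord b" for a b
  proof -
    define p where "p = page {a,b}"
    have abE: "{a,b} \<in> edges G" using ab edges_G by blast
    have pk: "p < k" using pg abE p_def by simp
    define f where "f z = (SOME w. adj z w \<and> page {z,w} = p)" for z
    have f1: "adj z (f z) \<and> page {z, f z} = p" if "z \<in> verts G" for z
      unfolding f_def using someI_ex[OF surj[OF that pk]] .
    have uniq: "w = w'" if "adj z w" "page {z,w} = p" "adj z w'" "page {z,w'} = p" for z w w'
    proof (rule ccontr)
      assume "w \<noteq> w'"
      then have "{z,w} \<noteq> {z,w'}" by (auto simp: doubleton_eq_iff)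
      moreover have "{z,w} \<in> edges G" "{z,w'} \<in> edges G" using that edges_G by blast+
      moreover have "page {z,w} = page {z,w'}" using that by simp
      ultimately have "{z,w} \<inter> {z,w'} = {}" by (intro mt) auto
      then show False by auto
    qed
    have "\<forall>z\<in>S a b. f z \<in> S a b \<and> f z \<noteq> z \<and> f (f z) = z"
    proof
      fix z assume z: "z \<in> S a b"
      then have zV: "z \<in> verts G" and oz: "ord a < ord z" "ord z < ord b" unfolding S_def by auto
      let ?w = "f z"
      have w: "adj z ?w" "page {z, ?w} = p" using f1[OF zV] by blast+
      have wV: "?w \<in> verts G" using adj_V w by blast
      have zwE: "{z, ?w} \<in> edges G" using w edges_G by blast
      have "{z, ?w} \<noteq> {a,b}" using oz by (auto simp: doubleton_eq_iff)
      then have "{z, ?w} \<inter> {a,b} = {}" using w(2) p_def by (intro mt[OF zwE abE]) simp_all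
      then have wa: "?w \<noteq> a" "?w \<noteq> b" by auto
      have aV: "a \<in> verts G" "b \<in> verts G" using adj_V ab by auto
      have "ord ?w \<noteq> ord a" "ord ?w \<noteq> ord b"
        using inj_on_contraD[OF inj wa(1) wV aV(1)] inj_on_contraD[OF inj wa(2) wV aV(2)] by auto
      moreover have "\<not> (ord ?w < ord a \<and> ord a < ord z \<and> ord z < ord b)"
      proof -
        have e: "{?w, z} = {z, ?w}" by auto
        have pe: "page {?w,z} = page {a,b}" using w(2) p_def unfolding e by simp
        show ?thesis using cr[OF _ abE pe] zwE unfolding e by blast
      qed
      moreover have "\<not> (ord a < ord z \<and> ord z < ord b \<and> ord b < ord ?w)"
      proof -
        have pe: "page {a,b} = page {z, ?w}" using w(2) p_def by simp
        show ?thesis using cr[OF abE zwE pe] .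
      qed
      ultimately have "f z \<in> S a b" using oz wV unfolding S_def by auto
      moreover have "f z \<noteq> z" using adj_irrefl[OF w(1)] by simp
      moreover have "f (f z) = z"
      proof -
        have "adj ?w (f ?w) \<and> page {?w, f ?w} = p" using f1[OF wV] .
        moreover have "adj ?w z" using w adj_sym by blast
        moreover have "page {?w, z} = p" using w(2) by (metis insert_commute)
        ultimately show ?thesis using uniq by blast
      qed
      ultimately show "f z \<in> S a b \<and> f z \<noteq> z \<and> f (f z) = z" by blast
    qed
    then show ?thesis by (rule inv_even[OF finS])
  qed
  have tri: False if "adj x y" "adj y z" "adj x z" "ord x < ord y" "ord y < ord z" for x y z
  proof -
    have yV: "y \<in> verts G" using adj_V that by blast
    have iy: "\<And>w. w \<in> verts G \<Longrightarrow> ord w = ord y \<Longrightarrow> w = y" using inj_onD[OF inj _ _ yV] by blast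
    have "S x z = S x y \<union> ({y} \<union> S y z)" unfolding S_def using that yV iy
      by (auto simp del: adj.simps) (meson linorder_neqE_nat)
    moreover have "S x y \<inter> ({y} \<union> S y z) = {}" "{y} \<inter> S y z = {}" unfolding S_def by auto
    ultimately have "card (S x z) = card (S x y) + (1 + card (S y z))"
      using finS by (simp add: card_Un_disjoint)
    moreover have "even (card (S x z))" "even (card (S x y))" "even (card (S y z))"
      using par that by (meson less_trans)+
    ultimately show False by simp
  qed
  have a01: "adj (0,0) (1,0)" "adj (1,0) (2,0)" "adj (0,0) (2,0)" using N3 L3 by auto
  have V3: "(0,0) \<in> verts G" "(1,0) \<in> verts G" "(2,0) \<in> verts G" using N3 L3 by (auto simp: verts_G)
  have d: "ord (0,0) \<noteq> ord (1,0)" "ord (1,0) \<noteq> ord (2,0)" "ord (0,0) \<noteq> ord (2,0)"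
    using inj_on_contraD[OF inj _ V3(1) V3(2)] inj_on_contraD[OF inj _ V3(2) V3(3)]
      inj_on_contraD[OF inj _ V3(1) V3(3)] by auto
  have s: "adj (1,0) (0,0)" "adj (2,0) (1,0)" "adj (2,0) (0,0)" using a01 adj_sym by blast+
  consider "ord (0,0) < ord (1,0)" "ord (1,0) < ord (2,0)"
    | "ord (0,0) < ord (2,0)" "ord (2,0) < ord (1,0)"
    | "ord (1,0) < ord (0,0)" "ord (0,0) < ord (2,0)"
    | "ord (1,0) < ord (2,0)" "ord (2,0) < ord (0,0)"
    | "ord (2,0) < ord (0,0)" "ord (0,0) < ord (1,0)"
    | "ord (2,0) < ord (1,0)" "ord (1,0) < ord (0,0)"
    using d by linarith
  then show False
  proof cases
    case 1 then show ?thesis using tri[of "(0,0)" "(1,0)" "(2,0)"] a01 s by blast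
  next
    case 2 then show ?thesis using tri[of "(0,0)" "(2,0)" "(1,0)"] a01 s by blast
  next
    case 3 then show ?thesis using tri[of "(1,0)" "(0,0)" "(2,0)"] a01 s by blast
  next
    case 4 then show ?thesis using tri[of "(1,0)" "(2,0)" "(0,0)"] a01 s by blast
  next
    case 5 then show ?thesis using tri[of "(2,0)" "(0,0)" "(1,0)"] a01 s by blast
  next
    case 6 then show ?thesis using tri[of "(2,0)" "(1,0)" "(0,0)"] a01 s by blast
  qed
qed

end



definition il :: "nat \<Rightarrow> nat \<Rightarrow> nat \<Rightarrow> nat \<Rightarrow> bool" where
 "il p q r s \<longleftrightarrow> (p<r \<and> r<q \<and> (s<p \<or> q<s)) \<or> (q<r \<and> r<p \<and> (s<q \<or> p<s))
     \<or> (p<s \<and> s<q \<and> (r<p \<or> q<r)) \<or> (q<s \<and> s<p \<and> (r<q \<or> p<r))"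

lemma il_sym: "il p q r s \<Longrightarrow> il r s p q" unfolding il_def by presburger
lemma il_sw1: "il p q r s \<longleftrightarrow> il q p r s" unfolding il_def by presburger
lemma il_sw2: "il p q r s \<longleftrightarrow> il p q s r" unfolding il_def by presburger
lemma il_same: "\<not> il p q p q" unfolding il_def by presburger

lemma modeq:
  fixes X Y t M :: nat
  assumes "(X + t) mod M = (Y + t) mod M"
  shows "X = Y \<or> X + M \<le> Y \<or> Y + M \<le> X"
proof (cases "X \<le> Y")
  case True
  then have "M dvd (Y + t) - (X + t)" using assms mod_eq_dvd_iff_nat[of "X+t" "Y+t" M] by simp
  then have "M dvd Y - X" by simp
  then show ?thesis using True by (cases "Y - X = 0") (auto dest: dvd_imp_le)
next
  case False
  then have "M dvd (X + t) - (Y + t)" using assms mod_eq_dvd_iff_nat[of "Y+t" "X+t" M] by simp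
  then have "M dvd X - Y" by simp
  then show ?thesis using False by (cases "X - Y = 0") (auto dest: dvd_imp_le)
qed

lemma mod2: fixes y M :: nat assumes "y < 2*M" shows "y mod M = (if y < M then y else y - M)"
proof (cases "y < M")
  case True then show ?thesis by simp
next
  case False
  then have "y mod M = (y - M) mod M" using le_mod_geq by simp
  also have "\<dots> = y - M" using assms False by simp
  finally show ?thesis using False by simp
qed

context ps begin

lemma Lodd: "even (L - 1)" "odd (L - 2)" "2 \<le> L - 1" using oddL L3 by (auto simp: even_iff_mod_2_eq_zero) presburger+

definition ob :: "nat \<times> nat \<Rightarrow> nat" where
  "ob v = (case v of (u,j) \<Rightarrow> (if even j then j*N + u else j*N + (N - 1 - u)))"

lemma ob_even: "even j \<Longrightarrow> ob (u,j) = j*N + u" by (simp add: ob_def)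
lemma ob_odd: "odd j \<Longrightarrow> u < N \<Longrightarrow> ob (u,j) + u + 1 = j*N + N" by (simp add: ob_def)
lemma ob_lo: "j*N \<le> ob (u,j)" by (simp add: ob_def)
lemma ob_hi: "u < N \<Longrightarrow> ob (u,j) < j*N + N" by (simp add: ob_def)
lemma blk: "j < k \<Longrightarrow> j*N + N \<le> k*N"
proof -
  assume "j < k"
  then have "Suc j * N \<le> k * N" by (intro mult_le_mono1) simp
  then show ?thesis by simp
qed

definition bp :: "nat \<Rightarrow> nat \<Rightarrow> nat" where
  "bp j s = (if j = 0 then (s+3) mod (N+2) else if j = 1 then (s+1) mod (N+1) + 1
            else if j = L - 1 then (s+2) mod (N+1) + 1 else s mod N + 1)"

definition cp :: "nat \<Rightarrow> nat \<Rightarrow> nat \<Rightarrow> nat" where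
  "cp j k x = (if j = 0 \<and> k = 1 then x+1 else if j = 0 \<and> k = L - 1 then x+2 else if odd j then 0 else N+1)"

fun pg :: "nat \<times> nat \<Rightarrow> nat \<times> nat \<Rightarrow> nat" where
  "pg (u,j) (w,k) = (if j = k then bp j (u+w) else cp (min j k) (max j k) (min u w))"

lemma pg_sym: "pg a b = pg b a"
  by (cases a; cases b) (simp add: add.commute min.commute max.commute)

definition pf :: "(nat \<times> nat) set \<Rightarrow> nat" where
  "pf e = (THE p. \<exists>a b. e = {a,b} \<and> p = pg a b)"

lemma pf_eq: "pf {a,b} = pg a b"
  unfolding pf_def
proof (rule the_equality)
  show "\<exists>c d. {a,b} = {c,d} \<and> pg a b = pg c d" by blast
next
  fix p assume "\<exists>c d. {a,b} = {c,d} \<and> p = pg c d"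
  then obtain c d where "{a,b} = {c,d}" "p = pg c d" by blast
  then have "(a = c \<and> b = d) \<or> (a = d \<and> b = c)" by (simp add: doubleton_eq_iff)
  then show "p = pg a b" using pg_sym[of c d] \<open>p = pg c d\<close> by (auto simp del: pg.simps)
qed

lemma bp_lt: "bp j s < N + 2"
proof -
  have "s mod N < N" using N3 by simp
  then show ?thesis by (simp add: bp_def)
qed

lemma cp_lt: "x < N \<Longrightarrow> cp j k x < N + 2" by (simp add: cp_def)

lemma pg_lt: "adj a b \<Longrightarrow> pg a b < N + 2"
  using bp_lt cp_lt by (cases a; cases b) auto

lemma bp_eq: assumes "j < L" "s \<le> 2*N" "s' \<le> 2*N" "bp j s = bp j s'"
  shows "s = s' \<or> s + N \<le> s' \<or> s' + N \<le> s"
proof -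
  consider "j = 0" | "j = 1" | "j \<noteq> 0" "j \<noteq> 1" "j = L - 1" | "j \<noteq> 0" "j \<noteq> 1" "j \<noteq> L - 1" by blast
  then show ?thesis
  proof cases
    case 1
    then have "(s+3) mod (N+2) = (s'+3) mod (N+2)" using assms(4) by (simp add: bp_def)
    then show ?thesis using modeq[of s 3 "N+2" s'] by auto
  next
    case 2
    then have "(s+1) mod (N+1) = (s'+1) mod (N+1)" using assms(4) by (simp add: bp_def)
    then show ?thesis using modeq[of s 1 "N+1" s'] by auto
  next
    case 3
    then have "(s+2) mod (N+1) = (s'+2) mod (N+1)" using assms(4) by (simp add: bp_def)
    then show ?thesis using modeq[of s 2 "N+1" s'] by auto
  next
    case 4
    then have "(s+0) mod N = (s'+0) mod N" using assms(4) by (simp add: bp_def)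
    then show ?thesis using modeq[of s 0 N s'] by auto
  qed
qed

lemma cyc_next: assumes "j < L"
  shows "pg (x,j) (x,(j+1) mod L) = (if j = L - 1 then x+2 else if j = 0 then x+1 else if odd j then 0 else N+1)"
proof (cases "j = L - 1")
  case True
  then have "(j+1) mod L = 0" using L3 by simp
  then show ?thesis using True L3 by (simp add: cp_def)
next
  case False
  then have "(j+1) mod L = j + 1" using assms by simp
  then show ?thesis using False L3 by (auto simp: cp_def)
qed

lemma cyc_prev: assumes "j < L"
  shows "pg (x,j) (x,(j+L-1) mod L) = (if j = 0 then x+2 else if j = 1 then x+1 else if odd (j-1) then 0 else N+1)"
proof (cases "j = 0")
  case True
  then show ?thesis using L3 predm[OF assms] by (simp add: cp_def)
next
  case False
  then have "(j+L-1) mod L = j - 1" using predm[OF assms] by simp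
  then show ?thesis using False L3 by (auto simp: cp_def)
qed

lemma next_ne: "j < L \<Longrightarrow> (j+1) mod L \<noteq> j" using suc_mod_ne by simp
lemma prev_ne: "j < L \<Longrightarrow> (j+L-1) mod L \<noteq> j" using predm L3 by (simp split: if_splits; linarith)

lemma cyc_ne: assumes "j < L" shows "pg (x,j) (x,(j+1) mod L) \<noteq> pg (x,j) (x,(j+L-1) mod L)"
  unfolding cyc_next[OF assms] cyc_prev[OF assms] using Lodd L3 by auto

lemma cover:
  assumes "u < N" "w < N" "u \<noteq> w" "j < L" "(u \<le> x \<and> x \<le> w) \<or> (w \<le> x \<and> x \<le> u)"
  shows "bp j (u+w) \<noteq> pg (x,j) (x,(j+1) mod L)" "bp j (u+w) \<noteq> pg (x,j) (x,(j+L-1) mod L)"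
proof -
  have s: "u + w + 3 \<le> 2*N" using assms by (cases "u < w") linarith+
  have s1: "u + w + 3 < 2*(N+2)" using s by simp
  have s2: "u+w+1 < 2*(N+1)" using s by simp
  have s3: "u+w+2 < 2*(N+1)" using s by simp
  consider "j = 0" | "j = 1" | "j \<noteq> 0" "j \<noteq> 1" "j = L - 1" | "j \<noteq> 0" "j \<noteq> 1" "j \<noteq> L - 1" by blast
  then have "bp j (u+w) \<noteq> pg (x,j) (x,(j+1) mod L) \<and> bp j (u+w) \<noteq> pg (x,j) (x,(j+L-1) mod L)"
  proof cases
    case 1
    have m: "(u+w+3) mod (N+2) = (if u+w+3 < N+2 then u+w+3 else u+w+3-(N+2))"
      using s1 by (intro mod2)
    have nx: "pg (x,j) (x,(j+1) mod L) = x+1" using cyc_next[OF assms(4)] 1 L3 by simp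
    have pv: "pg (x,j) (x,(j+L-1) mod L) = x+2" using cyc_prev[OF assms(4)] 1 by simp
    have b: "bp j (u+w) = (if u+w+3 < N+2 then u+w+3 else u+w+3-(N+2))" using 1 m by (simp add: bp_def)
    show ?thesis unfolding nx pv b using assms(1,2,5) by (auto split: if_splits; arith)
  next
    case 2
    have m: "(u+w+1) mod (N+1) = (if u+w+1 < N+1 then u+w+1 else u+w+1-(N+1))"
      using s2 by (intro mod2)
    have nx: "pg (x,j) (x,(j+1) mod L) = 0" using cyc_next[OF assms(4)] 2 L3 by simp
    have pv: "pg (x,j) (x,(j+L-1) mod L) = x+1" using cyc_prev[OF assms(4)] 2 by simp
    have b: "bp j (u+w) = (if u+w+1 < N+1 then u+w+1 else u+w+1-(N+1)) + 1" using 2 m by (simp add: bp_def)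
    show ?thesis unfolding nx pv b using assms(1,2,5) by (auto split: if_splits; arith)
  next
    case 3
    have m: "(u+w+2) mod (N+1) = (if u+w+2 < N+1 then u+w+2 else u+w+2-(N+1))"
      using s3 by (intro mod2)
    have nx: "pg (x,j) (x,(j+1) mod L) = x+2" using cyc_next[OF assms(4)] 3 by simp
    have pv: "pg (x,j) (x,(j+L-1) mod L) = 0" using cyc_prev[OF assms(4)] 3 Lodd by simp
    have b: "bp j (u+w) = (if u+w+2 < N+1 then u+w+2 else u+w+2-(N+1)) + 1" using 3 m by (simp add: bp_def)
    show ?thesis unfolding nx pv b using assms(1,2,5) by (auto split: if_splits; arith)
  next
    case 4
    have "(u+w) mod N < N" using N3 by simp
    then show ?thesis unfolding cyc_next[OF assms(4)] cyc_prev[OF assms(4)] bp_def using 4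
      by auto
  qed
  then show "bp j (u+w) \<noteq> pg (x,j) (x,(j+1) mod L)" "bp j (u+w) \<noteq> pg (x,j) (x,(j+L-1) mod L)" by auto
qed

lemma vertex_distinct:
  assumes "adj z p" "adj z q" "p \<noteq> q" shows "pg z p \<noteq> pg z q"
proof -
  obtain x j where z: "z = (x,j)" by (cases z)
  obtain w k where p: "p = (w,k)" by (cases p)
  obtain w' k' where q: "q = (w',k')" by (cases q)
  have xj: "x < N" "j < L" using assms(1) z by (cases p; auto)+
  note ai = adj_iff[OF xj]
  have P: "w < N" "k < L" "(k=j \<and> w\<noteq>x) \<or> (w=x \<and> (k = (j+1) mod L \<or> k = (j+L-1) mod L))"
    using assms(1) unfolding z p ai by auto
  have Q: "w' < N" "k' < L" "(k'=j \<and> w'\<noteq>x) \<or> (w'=x \<and> (k' = (j+1) mod L \<or> k' = (j+L-1) mod L))"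
    using assms(2) unfolding z q ai by auto
  show ?thesis
  proof (cases "k = j")
    case True
    then have wx: "w \<noteq> x" using P(3) next_ne[OF xj(2)] prev_ne[OF xj(2)] by auto
    have pgp: "pg z p = bp j (x+w)" using z p True by simp
    show ?thesis
    proof (cases "k' = j")
      case True
      have pgq: "pg z q = bp j (x+w')" using z q True by simp
      have "w \<noteq> w'" using assms(3) p q \<open>k = j\<close> True by auto
      then show ?thesis unfolding pgp pgq using bp_eq[OF xj(2), of "x+w" "x+w'"] P Q xj by auto
    next
      case False
      then have q2: "w' = x" "k' = (j+1) mod L \<or> k' = (j+L-1) mod L" using Q by auto
      then have "pg z q = pg (x,j) (x,(j+1) mod L) \<or> pg z q = pg (x,j) (x,(j+L-1) mod L)"
        using z q by (auto simp del: pg.simps)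
      then show ?thesis unfolding pgp using cover[OF xj(1) P(1) wx[symmetric] xj(2), of x] nat_le_linear[of x w] by (auto simp del: pg.simps)
    qed
  next
    case False
    then have p2: "w = x" "k = (j+1) mod L \<or> k = (j+L-1) mod L" using P by auto
    show ?thesis
    proof (cases "k' = j")
      case True
      then have wx': "w' \<noteq> x" using Q(3) next_ne[OF xj(2)] prev_ne[OF xj(2)] by auto
      have pgq: "pg z q = bp j (x+w')" using z q True by simp
      have "pg z p = pg (x,j) (x,(j+1) mod L) \<or> pg z p = pg (x,j) (x,(j+L-1) mod L)"
        using z p p2 by (auto simp del: pg.simps)
      then show ?thesis unfolding pgq using cover[OF xj(1) Q(1) wx'[symmetric] xj(2), of x] nat_le_linear[of x w'] by (auto simp del: pg.simps)
    next
      case False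
      then have q2: "w' = x" "k' = (j+1) mod L \<or> k' = (j+L-1) mod L" using Q by auto
      have "k \<noteq> k'" using assms(3) p q p2 q2 by auto
      then have "(p = (x,(j+1) mod L) \<and> q = (x,(j+L-1) mod L)) \<or> (q = (x,(j+1) mod L) \<and> p = (x,(j+L-1) mod L))"
        using p2 q2 p q by auto
      then show ?thesis using cyc_ne[OF xj(2), of x] z by (auto simp del: pg.simps)
    qed
  qed
qed

end



lemma il_outs: "(r<p \<and> r<q \<or> p<r \<and> q<r) \<Longrightarrow> (s<p \<and> s<q \<or> p<s \<and> q<s) \<Longrightarrow> \<not> il p q r s"
proof
  assume "(r<p \<and> r<q \<or> p<r \<and> q<r)" "(s<p \<and> s<q \<or> p<s \<and> q<s)" "il p q r s"
  then show False unfolding il_def by (elim disjE conjE; linarith)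
qed
lemma il_ins: "(p<r \<and> r<q \<or> q<r \<and> r<p) \<Longrightarrow> (p<s \<and> s<q \<or> q<s \<and> s<p) \<Longrightarrow> \<not> il p q r s"
proof
  assume "(p<r \<and> r<q \<or> q<r \<and> r<p)" "(p<s \<and> s<q \<or> q<s \<and> s<p)" "il p q r s"
  then show False unfolding il_def by (elim disjE conjE; linarith)
qed
lemma il_sum: fixes p q r s B M :: nat
  assumes "B \<le> p" "B \<le> q" "B \<le> r" "B \<le> s" "p < B+M" "q < B+M" "r < B+M" "s < B+M"
    "p+q = r+s \<or> p+q+M \<le> r+s \<or> r+s+M \<le> p+q"
  shows "\<not> il p q r s"
proof
  assume "il p q r s"
  then show False using assms unfolding il_def by (elim disjE conjE; linarith)
qed

lemma il_oLR: "r<p \<Longrightarrow> r<q \<Longrightarrow> p<s \<Longrightarrow> q<s \<Longrightarrow> \<not> il p q r s" by (rule il_outs) auto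
lemma il_oRR: "p<r \<Longrightarrow> q<r \<Longrightarrow> p<s \<Longrightarrow> q<s \<Longrightarrow> \<not> il p q r s" by (rule il_outs) auto
lemma il_oLL: "r<p \<Longrightarrow> r<q \<Longrightarrow> s<p \<Longrightarrow> s<q \<Longrightarrow> \<not> il p q r s" by (rule il_outs) auto
lemma il_iA: "p<r \<Longrightarrow> r<q \<Longrightarrow> p<s \<Longrightarrow> s<q \<Longrightarrow> \<not> il p q r s" by (rule il_ins) auto

context ps begin

lemma cyc_pg: "k+1 < L \<Longrightarrow> pg (x,k) (x,k+1) = (if k=0 then x+1 else if odd k then 0 else N+1)"
  by (auto simp: cp_def)

lemma close_pg: "pg (x,0) (x,L-1) = x+2"
  using L3 by (simp add: cp_def)

lemma ob0: "ob (x,0) = x" by (simp add: ob_even)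

lemma obL: "ob (x,L-1) = (L-1)*N + x" using Lodd by (simp add: ob_even)

lemma LII:
  assumes "u<N" "w<N" "x<N" "y<N" "u\<noteq>w" "x\<noteq>y" "j<L" "k<L"
    "pg (u,j) (w,j) = pg (x,k) (y,k)" "il (ob(u,j)) (ob(w,j)) (ob(x,k)) (ob(y,k))"
  shows False
proof (cases "j = k")
  case False
  have b: "ob (u,j) < j*N+N" "ob (w,j) < j*N+N" "ob (x,k) < k*N+N" "ob (y,k) < k*N+N"
    "j*N \<le> ob (u,j)" "j*N \<le> ob (w,j)" "k*N \<le> ob (x,k)" "k*N \<le> ob (y,k)"
    using ob_lo ob_hi assms by auto
  from False consider "j < k" | "k < j" by linarith
  then show False
  proof cases
    case 1
    have "j*N+N \<le> k*N" using blk 1 by simp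
    then have "\<not> il (ob(u,j)) (ob(w,j)) (ob(x,k)) (ob(y,k))" using b by (intro il_outs) linarith+
    then show False using assms(10) by simp
  next
    case 2
    have "k*N+N \<le> j*N" using blk 2 by simp
    then have "\<not> il (ob(u,j)) (ob(w,j)) (ob(x,k)) (ob(y,k))" using b by (intro il_outs) linarith+
    then show False using assms(10) by simp
  qed
next
  case True
  have "bp j (u+w) = bp j (x+y)" using assms(9) True by simp
  then have D: "u+w = x+y \<or> u+w+N \<le> x+y \<or> x+y+N \<le> u+w"
    using bp_eq[OF assms(7)] assms(1-4) by simp
  have b: "ob (u,j) < j*N+N" "ob (w,j) < j*N+N" "ob (x,j) < j*N+N" "ob (y,j) < j*N+N"
    "j*N \<le> ob (u,j)" "j*N \<le> ob (w,j)" "j*N \<le> ob (x,j)" "j*N \<le> ob (y,j)"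
    using ob_lo ob_hi assms by auto
  have S: "ob (u,j) + ob (w,j) = ob (x,j) + ob (y,j) \<or> ob (u,j) + ob (w,j) + N \<le> ob (x,j) + ob (y,j)
     \<or> ob (x,j) + ob (y,j) + N \<le> ob (u,j) + ob (w,j)"
  proof (cases "even j")
    case True
    have e: "ob (u,j) = j*N+u" "ob (w,j) = j*N+w" "ob (x,j) = j*N+x" "ob (y,j) = j*N+y"
      using ob_even True by auto
    show ?thesis unfolding e using D by linarith
  next
    case False
    have e: "ob (u,j)+u+1 = j*N+N" "ob (w,j)+w+1 = j*N+N" "ob (x,j)+x+1 = j*N+N" "ob (y,j)+y+1 = j*N+N"
      using ob_odd False assms by auto
    show ?thesis using e D by linarith
  qed
  have "\<not> il (ob(u,j)) (ob(w,j)) (ob(x,j)) (ob(y,j))" by (rule il_sum[OF b(5-8) b(1-4) S])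
  then show False using assms(10) True by simp
qed



lemma ob_cmp: "u < N \<Longrightarrow> w < N \<Longrightarrow> ob (u,j) < ob (w,j) \<longleftrightarrow> (if even j then u < w else w < u)"
  by (auto simp: ob_def)

lemma ob_out: assumes "u<N" "w<N" "x<N" "(x<u \<and> x<w) \<or> (u<x \<and> w<x)"
  shows "(ob(x,j) < ob(u,j) \<and> ob(x,j) < ob(w,j)) \<or> (ob(u,j) < ob(x,j) \<and> ob(w,j) < ob(x,j))"
  using assms ob_cmp[of x u j] ob_cmp[of x w j] ob_cmp[of u x j] ob_cmp[of w x j] by (cases "even j") auto

lemma sucN: "(k+1)*N = k*N + N" by simp

lemma cover_out: assumes "u<N" "w<N" "u\<noteq>w" "j<L" "x < N"
  "bp j (u+w) = pg (x,j) (x,(j+1) mod L) \<or> bp j (u+w) = pg (x,j) (x,(j+L-1) mod L)"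
  shows "(ob(x,j) < ob(u,j) \<and> ob(x,j) < ob(w,j)) \<or> (ob(u,j) < ob(x,j) \<and> ob(w,j) < ob(x,j))"
proof -
  have "\<not> ((u \<le> x \<and> x \<le> w) \<or> (w \<le> x \<and> x \<le> u))" using cover[OF assms(1-4)] assms(6) by metis
  then have "(x<u \<and> x<w) \<or> (u<x \<and> w<x)" by auto
  then show ?thesis using ob_out assms by blast
qed

lemma LIC:
  assumes "u<N" "w<N" "x<N" "u\<noteq>w" "j<L" "k+1<L"
    "pg (u,j) (w,j) = pg (x,k) (x,k+1)" "il (ob(u,j)) (ob(w,j)) (ob(x,k)) (ob(x,k+1))"
  shows False
proof -
  have b: "ob (u,j) < j*N+N" "ob (w,j) < j*N+N" "j*N \<le> ob (u,j)" "j*N \<le> ob (w,j)"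
    "k*N \<le> ob (x,k)" "ob (x,k) < k*N+N" "(k+1)*N \<le> ob (x,k+1)" "ob (x,k+1) < (k+1)*N+N"
    using ob_lo[of j u] ob_lo[of j w] ob_lo[of k x] ob_lo[of "k+1" x] ob_hi[of u j] ob_hi[of w j]
      ob_hi[of x k] ob_hi[of x "k+1"] assms by auto
  note e = sucN[of k]
  consider "j < k" | "j = k" | "j = k+1" | "k+1 < j" by linarith
  then have "\<not> il (ob(u,j)) (ob(w,j)) (ob(x,k)) (ob(x,k+1))"
  proof cases
    case 1
    have "j*N+N \<le> k*N" using blk 1 by simp
    then show ?thesis using b e by (intro il_oRR) linarith+
  next
    case 2
    have "bp j (u+w) = pg (x,j) (x,(j+1) mod L)" using assms(6,7) 2 by simp
    then have R: "(ob(x,j) < ob(u,j) \<and> ob(x,j) < ob(w,j)) \<or> (ob(u,j) < ob(x,j) \<and> ob(w,j) < ob(x,j))"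
      using cover_out assms by blast
    have jk: "j*N = k*N" using 2 by simp
    have "ob(u,j) < ob(x,k+1) \<and> ob(w,j) < ob(x,k+1)" using b e jk by (intro conjI; linarith)
    then show ?thesis using R 2 by (intro il_outs) auto
  next
    case 3
    have "(j+L-1) mod L = k" using predm[OF assms(5)] 3 by simp
    then have "bp j (u+w) = pg (x,j) (x,(j+L-1) mod L)" using assms(7) 3 pg_sym[of "(x,k)" "(x,k+1)"]
      by (simp del: pg.simps) (simp add: pg_sym)
    then have R: "(ob(x,j) < ob(u,j) \<and> ob(x,j) < ob(w,j)) \<or> (ob(u,j) < ob(x,j) \<and> ob(w,j) < ob(x,j))"
      using cover_out assms by blast
    have jk: "j*N = k*N + N" using 3 by simp
    have "ob(x,k) < ob(u,j) \<and> ob(x,k) < ob(w,j)" using b e jk by (intro conjI; linarith)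
    then show ?thesis using R 3 by (intro il_outs) auto
  next
    case 4
    have "(k+1)*N+N \<le> j*N" using blk[OF 4] .
    then show ?thesis using b e by (intro il_oLL) linarith+
  qed
  then show False using assms(8) by simp
qed



lemma LN: "N \<le> (L-1)*N" using blk[of 0 "L-1"] L3 by simp

lemma LIK:
  assumes "u<N" "w<N" "x<N" "u\<noteq>w" "j<L"
    "pg (u,j) (w,j) = pg (x,0) (x,L-1)" "il (ob(u,j)) (ob(w,j)) (ob(x,0)) (ob(x,L-1))"
  shows False
proof -
  have b: "ob (u,j) < j*N+N" "ob (w,j) < j*N+N" "j*N \<le> ob (u,j)" "j*N \<le> ob (w,j)"
    using ob_lo[of j u] ob_lo[of j w] ob_hi[of u j] ob_hi[of w j] assms by auto
  have c: "ob (x,0) = x" "ob (x,L-1) = (L-1)*N + x" using ob0 obL by auto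
  note ln = LN
  consider "j = 0" | "j = L - 1" | "0 < j" "j < L - 1" using assms(5) by linarith
  then have "\<not> il (ob(u,j)) (ob(w,j)) (ob(x,0)) (ob(x,L-1))"
  proof cases
    case 1
    have m: "(j+L-1) mod L = L - 1" using 1 L3 by simp
    have "bp j (u+w) = pg (x,j) (x,(j+L-1) mod L)" using assms(6) 1 unfolding m by simp
    then have R: "(ob(x,j) < ob(u,j) \<and> ob(x,j) < ob(w,j)) \<or> (ob(u,j) < ob(x,j) \<and> ob(w,j) < ob(x,j))"
      using cover_out assms by blast
    have j0: "j*N = 0" using 1 by simp
    have "ob(u,j) < ob(x,L-1) \<and> ob(w,j) < ob(x,L-1)" using b c ln j0 by (intro conjI; linarith)
    then show ?thesis using R 1 by (intro il_outs) auto
  next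
    case 2
    have m: "(j+1) mod L = 0" using 2 L3 by simp
    have "bp j (u+w) = pg (x,j) (x,(j+1) mod L)" using assms(6) 2 pg_sym[of "(x,0)" "(x,L-1)"]
      unfolding m by (simp del: pg.simps) (simp add: pg_sym)
    then have R: "(ob(x,j) < ob(u,j) \<and> ob(x,j) < ob(w,j)) \<or> (ob(u,j) < ob(x,j) \<and> ob(w,j) < ob(x,j))"
      using cover_out assms by blast
    have jN: "j*N = (L-1)*N" using 2 by simp
    have "ob(x,0) < ob(u,j) \<and> ob(x,0) < ob(w,j)" using b c ln jN assms(3) by (intro conjI; linarith)
    then show ?thesis using R 2 by (intro il_outs) auto
  next
    case 3
    have j1: "N \<le> j*N" using blk[of 0 j] 3 by simp
    have j2: "j*N + N \<le> (L-1)*N" using blk[of j "L-1"] 3 by simp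
    show ?thesis using b c j1 j2 assms(3) by (intro il_oLR) linarith+
  qed
  then show False using assms(7) by simp
qed

lemma LCC:
  assumes "x<N" "y<N" "k+1<L" "k'+1<L"
    "pg (x,k) (x,k+1) = pg (y,k') (y,k'+1)" "il (ob(x,k)) (ob(x,k+1)) (ob(y,k')) (ob(y,k'+1))"
  shows False
proof -
  have P: "(if k=0 then x+1 else if odd k then 0 else N+1) = (if k'=0 then y+1 else if odd k' then 0 else N+1)"
    using assms(5) cyc_pg[OF assms(3), of x] cyc_pg[OF assms(4), of y] by simp
  have b: "k*N \<le> ob (x,k)" "ob (x,k) < k*N+N" "(k+1)*N \<le> ob (x,k+1)" "ob (x,k+1) < (k+1)*N+N"
    "k'*N \<le> ob (y,k')" "ob (y,k') < k'*N+N" "(k'+1)*N \<le> ob (y,k'+1)" "ob (y,k'+1) < (k'+1)*N+N"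
    using ob_lo[of k x] ob_lo[of "k+1" x] ob_hi[of x k] ob_hi[of x "k+1"]
      ob_lo[of k' y] ob_lo[of "k'+1" y] ob_hi[of y k'] ob_hi[of y "k'+1"] assms by auto
  note e = sucN[of k] sucN[of k']
  show False
  proof (cases "k = k'")
    case True
    show False
    proof (cases "x = y")
      case True
      then show False using assms(6) \<open>k = k'\<close> il_same by simp
    next
      case False
      have c1: "ob(x,k) < ob(y,k) \<Longrightarrow> ob(y,k+1) < ob(x,k+1)"
        using ob_cmp[of x y k] ob_cmp[of y x "k+1"] assms(1,2) by (cases "even k") simp_all
      have c2: "ob(y,k) < ob(x,k) \<Longrightarrow> ob(x,k+1) < ob(y,k+1)"
        using ob_cmp[of y x k] ob_cmp[of x y "k+1"] assms(1,2) by (cases "even k") simp_all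
      have c3: "ob(x,k) \<noteq> ob(y,k)"
        using ob_cmp[of x y k] ob_cmp[of y x k] assms(1,2) False by (cases "even k"; cases "x < y") auto
      have b2: "ob(y,k) < k*N+N" "(k+1)*N \<le> ob(y,k+1)" using b \<open>k = k'\<close> by simp_all
      have "\<not> il (ob(x,k)) (ob(x,k+1)) (ob(y,k)) (ob(y,k+1))"
      proof (cases "ob(x,k) < ob(y,k)")
        case True
        then have "ob(y,k+1) < ob(x,k+1)" using c1 by simp
        then show ?thesis using True b b2 e by (intro il_iA) linarith+
      next
        case False
        then have lt: "ob(y,k) < ob(x,k)" using c3 by simp
        then have "ob(x,k+1) < ob(y,k+1)" using c2 by simp
        then show ?thesis using lt b b2 e by (intro il_oLR) linarith+
      qed
      then show False using assms(6) True by simp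
    qed
  next
    case False
    have nz: "k \<noteq> 0" "k' \<noteq> 0" using P False assms(1,2) by (auto split: if_splits)
    then have "odd k = odd k'" using P by (auto split: if_splits)
    then have "k+2 \<le> k' \<or> k'+2 \<le> k" using False by presburger
    then have "\<not> il (ob(x,k)) (ob(x,k+1)) (ob(y,k')) (ob(y,k'+1))"
    proof
      assume h: "k+2 \<le> k'"
      have "(k+1)*N + N \<le> k'*N" using blk[of "k+1" k'] h by simp
      then show ?thesis using b e by (intro il_oRR) linarith+
    next
      assume h: "k'+2 \<le> k"
      have l: "(k'+1)*N + N \<le> k*N" using blk[of "k'+1" k] h by simp
      have r1: "ob (y,k') < ob (x,k)" using l b(6) b(1) e(2) by linarith
      have xx: "ob (x,k) < ob (x,k+1)" using b(2) b(3) e(1) by linarith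
      have r2: "ob (y,k') < ob (x,k+1)" using r1 xx by linarith
      have r3: "ob (y,k'+1) < ob (x,k)" using l b(8) b(1) by linarith
      have r4: "ob (y,k'+1) < ob (x,k+1)" using r3 xx by linarith
      show ?thesis using r1 r2 r3 r4 by (rule il_oLL)
    qed
    then show False using assms(6) by simp
  qed
qed

lemma LCK:
  assumes "x<N" "y<N" "k+1<L"
    "pg (y,k) (y,k+1) = pg (x,0) (x,L-1)" "il (ob(y,k)) (ob(y,k+1)) (ob(x,0)) (ob(x,L-1))"
  shows False
proof -
  have P: "(if k=0 then y+1 else if odd k then 0 else N+1) = x + 2"
    using assms(4) cyc_pg[OF assms(3), of y] close_pg[of x] by simp
  have b: "k*N \<le> ob (y,k)" "ob (y,k) < k*N+N" "(k+1)*N \<le> ob (y,k+1)" "ob (y,k+1) < (k+1)*N+N"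
    using ob_lo[of k y] ob_lo[of "k+1" y] ob_hi[of y k] ob_hi[of y "k+1"] assms by auto
  have c: "ob (x,0) = x" "ob (x,L-1) = (L-1)*N + x" using ob0 obL by auto
  note e = sucN[of k]
  have "\<not> il (ob(y,k)) (ob(y,k+1)) (ob(x,0)) (ob(x,L-1))"
  proof (cases "k = 0")
    case True
    then have yx: "y = x + 1" using P by simp
    have o: "ob (y,0) = y" "ob (y,1) + y + 1 = N + N" using ob0 ob_odd[of 1 y] assms(2) by auto
    have l2: "N + N \<le> (L-1)*N" using blk[of 1 "L-1"] L3 by simp
    have o2: "ob (y,k) = y" "ob (y,k+1) + y + 1 = N + N" using o True by auto
    show ?thesis unfolding c using o2 yx l2 assms(2) by (intro il_oLR) linarith+
  next
    case False
    then have ev: "even k" "x + 2 = N + 1" using P by (auto split: if_splits)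
    have "k + 1 \<noteq> L - 1" using ev(1) oddL L3 by presburger
    then have k2: "k + 1 < L - 1" using assms(3) by linarith
    have l1: "(k+1)*N + N \<le> (L-1)*N" using blk[OF k2] .
    have l0: "N \<le> k*N" using blk[of 0 k] False by simp
    show ?thesis using b c e l1 l0 assms(1) by (intro il_oLR) linarith+
  qed
  then show False using assms(5) by simp
qed

lemma LKK:
  assumes "pg (x,0) (x,L-1) = pg (y,0) (y,L-1)" "il (ob(x,0)) (ob(x,L-1)) (ob(y,0)) (ob(y,L-1))"
  shows False
proof -
  have "x = y" using assms(1) close_pg by simp
  then show False using assms(2) il_same by simp
qed

end


context ps begin

definition can :: "nat \<times> nat \<Rightarrow> nat \<times> nat \<Rightarrow> bool" where
  "can a b \<longleftrightarrow> (\<exists>u w j. a=(u,j) \<and> b=(w,j) \<and> u<N \<and> w<N \<and> u\<noteq>w \<and> j<L)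
     \<or> (\<exists>x k. a=(x,k) \<and> b=(x,k+1) \<and> x<N \<and> k+1<L) \<or> (\<exists>x. a=(x,0) \<and> b=(x,L-1) \<and> x<N)"

lemma adj_can: assumes "adj a b" shows "can a b \<or> can b a"
proof -
  obtain u j w k where ab: "a = (u,j)" "b = (w,k)" by (cases a; cases b)
  have A: "u<N" "w<N" "j<L" "k<L" "(j=k \<and> u\<noteq>w) \<or> (u=w \<and> (k = (j+1) mod L \<or> j = (k+1) mod L))"
    using assms ab by auto
  consider "j=k" "u\<noteq>w" | "u=w" "k = (j+1) mod L" | "u=w" "j = (k+1) mod L" using A(5) by blast
  then show ?thesis
  proof cases
    case 1 then show ?thesis using A ab unfolding can_def by blast
  next
    case 2
    show ?thesis
    proof (cases "j+1 < L")
      case True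
      then have "k = j+1" using 2 succm[OF A(3)] by simp
      then show ?thesis using A ab 2 True unfolding can_def by blast
    next
      case False
      then have "k = 0" "j = L - 1" using 2 succm[OF A(3)] A(3) by auto
      then show ?thesis using A ab 2 unfolding can_def by blast
    qed
  next
    case 3
    show ?thesis
    proof (cases "k+1 < L")
      case True
      then have "j = k+1" using 3 succm[OF A(4)] by simp
      then show ?thesis using A ab 3 True unfolding can_def by blast
    next
      case False
      then have "j = 0" "k = L - 1" using 3 succm[OF A(4)] A(4) by auto
      then show ?thesis using A ab 3 unfolding can_def by blast
    qed
  qed
qed

lemma can_cross:
  assumes "can a b" "can c d" "pg a b = pg c d" "il (ob a) (ob b) (ob c) (ob d)"
  shows False
proof -
  have S: "il (ob c) (ob d) (ob a) (ob b)" using il_sym assms(4) by blast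
  have P: "pg c d = pg a b" using assms(3) by simp
  from assms(1) consider (I) u w j where "a=(u,j)" "b=(w,j)" "u<N" "w<N" "u\<noteq>w" "j<L"
    | (C) x k where "a=(x,k)" "b=(x,k+1)" "x<N" "k+1<L"
    | (K) x where "a=(x,0)" "b=(x,L-1)" "x<N" unfolding can_def by blast
  then show False
  proof cases
    case I
    from assms(2) consider (I') u' w' j' where "c=(u',j')" "d=(w',j')" "u'<N" "w'<N" "u'\<noteq>w'" "j'<L"
      | (C') x' k' where "c=(x',k')" "d=(x',k'+1)" "x'<N" "k'+1<L"
      | (K') x' where "c=(x',0)" "d=(x',L-1)" "x'<N" unfolding can_def by blast
    then show False
    proof cases
      case I' then show ?thesis using LII[OF I(3,4) I'(3,4) I(5) I'(5) I(6) I'(6)] assms(3,4) unfolding I(1,2) I'(1,2) by blast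
    next
      case C' then show ?thesis using LIC[OF I(3,4) C'(3) I(5) I(6) C'(4)] assms(3,4) unfolding I(1,2) C'(1,2) by blast
    next
      case K' then show ?thesis using LIK[OF I(3,4) K'(3) I(5) I(6)] assms(3,4) unfolding I(1,2) K'(1,2) by blast
    qed
  next
    case C
    from assms(2) consider (I') u' w' j' where "c=(u',j')" "d=(w',j')" "u'<N" "w'<N" "u'\<noteq>w'" "j'<L"
      | (C') x' k' where "c=(x',k')" "d=(x',k'+1)" "x'<N" "k'+1<L"
      | (K') x' where "c=(x',0)" "d=(x',L-1)" "x'<N" unfolding can_def by blast
    then show False
    proof cases
      case I' then show ?thesis using LIC[OF I'(3,4) C(3) I'(5) I'(6) C(4)] P S unfolding C(1,2) I'(1,2) by blast
    next
      case C' then show ?thesis using LCC[OF C(3) C'(3) C(4) C'(4)] assms(3,4) unfolding C(1,2) C'(1,2) by blast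
    next
      case K' then show ?thesis using LCK[OF K'(3) C(3) C(4)] assms(3,4) unfolding C(1,2) K'(1,2) by blast
    qed
  next
    case K
    from assms(2) consider (I') u' w' j' where "c=(u',j')" "d=(w',j')" "u'<N" "w'<N" "u'\<noteq>w'" "j'<L"
      | (C') x' k' where "c=(x',k')" "d=(x',k'+1)" "x'<N" "k'+1<L"
      | (K') x' where "c=(x',0)" "d=(x',L-1)" "x'<N" unfolding can_def by blast
    then show False
    proof cases
      case I' then show ?thesis using LIK[OF I'(3,4) K(3) I'(5) I'(6)] P S unfolding K(1,2) I'(1,2) by blast
    next
      case C' then show ?thesis using LCK[OF K(3) C'(3) C'(4)] P S unfolding K(1,2) C'(1,2) by blast
    next
      case K' then show ?thesis using LKK assms(3,4) unfolding K(1,2) K'(1,2) by blast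
    qed
  qed
qed

lemma cross_main:
  assumes "adj a b" "adj c d" "pg a b = pg c d"
  shows "\<not> il (ob a) (ob b) (ob c) (ob d)"
proof
  assume h: "il (ob a) (ob b) (ob c) (ob d)"
  have "can a b \<or> can b a" "can c d \<or> can d c" using adj_can assms by blast+
  then show False
  proof (elim disjE)
    assume "can a b" "can c d" then show False using can_cross assms(3) h by blast
  next
    assume c: "can a b" "can d c"
    have "pg a b = pg d c" using assms(3) pg_sym[of c d] by simp
    moreover have "il (ob a) (ob b) (ob d) (ob c)" using h il_sw2 by blast
    ultimately show False using can_cross[OF c] by blast
  next
    assume c: "can b a" "can c d"
    have "pg b a = pg c d" using assms(3) pg_sym[of a b] by simp
    moreover have "il (ob b) (ob a) (ob c) (ob d)" using h il_sw1 by blast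
    ultimately show False using can_cross[OF c] by blast
  next
    assume c: "can b a" "can d c"
    have "pg b a = pg d c" using assms(3) pg_sym[of a b] pg_sym[of c d] by simp
    moreover have "il (ob b) (ob a) (ob d) (ob c)" using h il_sw1 il_sw2 by blast
    ultimately show False using can_cross[OF c] by blast
  qed
qed

lemma emb: "matching_book_embedding G (N+2) ob pf"
  unfolding matching_book_embedding_def
proof (intro conjI)
  show "inj_on ob (verts G)"
  proof (rule inj_onI)
    fix a b assume a: "a \<in> verts G" and b: "b \<in> verts G" and e: "ob a = ob b"
    obtain u j w k where ab: "a = (u,j)" "b = (w,k)" "u<N" "w<N" using a b verts_G by auto
    have bd: "ob (u,j) < j*N+N" "ob (w,k) < k*N+N" "j*N \<le> ob (u,j)" "k*N \<le> ob (w,k)"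
      using ob_lo[of j u] ob_lo[of k w] ob_hi[of u j] ob_hi[of w k] ab by auto
    have e2: "ob (u,j) = ob (w,k)" using e ab by simp
    have "j = k"
    proof (rule ccontr)
      assume "j \<noteq> k"
      then consider "j < k" | "k < j" by linarith
      then show False
      proof cases
        case 1 then show False using blk[OF 1] bd e2 by linarith
      next
        case 2 then show False using blk[OF 2] bd e2 by linarith
      qed
    qed
    then have n1: "\<not> ob (u,j) < ob (w,j)" "\<not> ob (w,j) < ob (u,j)" using e2 by simp_all
    then have "\<not> (if even j then u < w else w < u)" "\<not> (if even j then w < u else u < w)"
      using ob_cmp[of u w j] ob_cmp[of w u j] ab(3,4) by simp_all
    then have "u = w" by (cases "even j") simp_all
    then show "a = b" using ab \<open>j = k\<close> by simp
  qed
next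
  show "\<forall>e\<in>edges G. pf e < N + 2"
  proof
    fix e assume "e \<in> edges G"
    then obtain a b where "e = {a,b}" "adj a b" using edges_G by blast
    then show "pf e < N + 2" using pf_eq pg_lt by simp
  qed
next
  show "\<forall>u v x y. {u, v} \<in> edges G \<longrightarrow> {x, y} \<in> edges G \<longrightarrow> pf {u, v} = pf {x, y} \<longrightarrow>
        \<not> (ob u < ob x \<and> ob x < ob v \<and> ob v < ob y)"
  proof (intro allI impI)
    fix u v x y assume h: "{u, v} \<in> edges G" "{x, y} \<in> edges G" "pf {u, v} = pf {x, y}"
    have "\<not> il (ob u) (ob v) (ob x) (ob y)"
      using cross_main[OF edge_adj[OF h(1)] edge_adj[OF h(2)]] h(3) pf_eq by simp
    then show "\<not> (ob u < ob x \<and> ob x < ob v \<and> ob v < ob y)" unfolding il_def by blast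
  qed
next
  show "\<forall>e\<in>edges G. \<forall>f\<in>edges G. e \<noteq> f \<longrightarrow> pf e = pf f \<longrightarrow> e \<inter> f = {}"
  proof (intro ballI impI)
    fix e f assume e: "e \<in> edges G" and f: "f \<in> edges G" and ne: "e \<noteq> f" and pe: "pf e = pf f"
    show "e \<inter> f = {}"
    proof (rule ccontr)
      assume "e \<inter> f \<noteq> {}"
      then obtain z where z: "z \<in> e" "z \<in> f" by auto
      obtain a b where ab: "e = {a,b}" "adj a b" using e edges_G by blast
      obtain c d where cd: "f = {c,d}" "adj c d" using f edges_G by blast
      obtain p where p: "e = {z,p}" "adj z p"
      proof (cases "z = a")
        case True then show ?thesis using that ab by blast
      next
        case False then have "z = b" using z ab by auto
        then have "e = {z,a}" "adj z a" using ab adj_sym by auto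
        then show ?thesis using that by blast
      qed
      obtain q where q: "f = {z,q}" "adj z q"
      proof (cases "z = c")
        case True then show ?thesis using that cd by blast
      next
        case False then have "z = d" using z cd by auto
        then have "f = {z,c}" "adj z c" using cd adj_sym by auto
        then show ?thesis using that by blast
      qed
      have "p \<noteq> q" using ne p q by auto
      then have "pg z p \<noteq> pg z q" using vertex_distinct p q by blast
      moreover have "pf e = pg z p" "pf f = pg z q" using p(1) q(1) pf_eq by simp_all
      ultimately show False using pe by simp
    qed
  qed
qed

lemma mbt_G: "mbt G = N + 2"
  unfolding mbt_def
proof (rule Least_equality)
  show "\<exists>ord page. matching_book_embedding G (N + 2) ord page" using emb by blast
next
  fix k assume "\<exists>ord page. matching_book_embedding G k ord page"
  then show "N + 2 \<le> k" using lower_bound by blast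
qed

end

theorem lemma2p4:
  fixes n m :: nat
  assumes "n \<ge> 2" and "m \<ge> 1"
  shows "mbt (cart_prod (complete_graph (2 * n)) (cycle_graph (2 * m + 1)))
           = max_degree (cart_prod (complete_graph (2 * n)) (cycle_graph (2 * m + 1))) + 1
       \<and> max_degree (cart_prod (complete_graph (2 * n)) (cycle_graph (2 * m + 1))) + 1
           = 2 * n + 2"
proof -
  interpret ps "2*n" "2*m+1" by unfold_locales (use assms in auto)
  have "mbt G = 2*n + 2" "max_degree G = 2*n + 1" using mbt_G max_degree_G by auto
  then show ?thesis unfolding G_def by simp
qed



end
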